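(* No twisted differential operator is globally hypo-elliptic.
   Context: $D_x=-\mathrm i\partial_x$, $D_y=-\mathrm i\partial_y$, $M_x,M_y$ multiplication by $x,y$ on $\mathbb R^2$. A twisted differential operator of order $m$ is $A=\sum_{j+k\le m}(-1)^{j+k}a_{kj}(\alpha D_y-\beta M_x)^j(\gamma D_x-\delta M_y)^k$ with $\alpha,\beta,\gamma,\delta\in\mathbb R$, $\alpha\delta-\beta\gamma=1$, $\beta\delta\ne0$, $a_{kj}\in\mathbb C$, $\sum_{j+k=m}|a_{kj}|\ne0$. The symbol of a differential operator written as $\sum_{|\alpha|\le m}a_\alpha(x)D^\alpha$ (coefficients to the left, $D_j=-\mathrm i\partial_j$) is $a(x,\xi)=\sum_{|\alpha|\le m}a_\alpha(x)\xi^\alpha$. An operator on $\mathcal S'(\mathbb R^n)$ with polynomial symbol $a(x,\xi)$ is globally hypo-elliptic if $a$ does not vanish outside a compact subset of $\mathbb R^{2n}$ and $\lim_{|x|+|\xi|\to\infty}\partial_x^\alpha\partial_\xi^\beta a(x,\xi)/a(x,\xi)=0$ for all $|\alpha|+|\beta|=1$. *)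

theory Defs
  imports "HOL-Analysis.Analysis"
begin

definition Dx :: "(real \<times> real \<Rightarrow> complex) \<Rightarrow> (real \<times> real \<Rightarrow> complex)" where
  "Dx u = (\<lambda>(x,y). - \<i> * vector_derivative (\<lambda>t. u (t, y)) (at x))"

definition Dy :: "(real \<times> real \<Rightarrow> complex) \<Rightarrow> (real \<times> real \<Rightarrow> complex)" where
  "Dy u = (\<lambda>(x,y). - \<i> * vector_derivative (\<lambda>t. u (x, t)) (at y))"

fun Dword :: "bool list \<Rightarrow> (real \<times> real \<Rightarrow> complex) \<Rightarrow> (real \<times> real \<Rightarrow> complex)" where
  "Dword [] u = u"
| "Dword (b # bs) u = (if b then Dx else Dy) (Dword bs u)"

definition smooth2 :: "(real \<times> real \<Rightarrow> complex) \<Rightarrow> bool" where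
  "smooth2 u \<longleftrightarrow> (\<forall>ws. Dword ws u differentiable_on UNIV)"

definition twP :: "real \<Rightarrow> real \<Rightarrow> (real \<times> real \<Rightarrow> complex) \<Rightarrow> (real \<times> real \<Rightarrow> complex)" where
  "twP \<alpha> \<beta> u = (\<lambda>(x,y). complex_of_real \<alpha> * Dy u (x,y) - complex_of_real (\<beta> * x) * u (x,y))"

definition twQ :: "real \<Rightarrow> real \<Rightarrow> (real \<times> real \<Rightarrow> complex) \<Rightarrow> (real \<times> real \<Rightarrow> complex)" where
  "twQ \<gamma> \<delta> u = (\<lambda>(x,y). complex_of_real \<gamma> * Dx u (x,y) - complex_of_real (\<delta> * y) * u (x,y))"

definition twisted_op ::
  "nat \<Rightarrow> (nat \<Rightarrow> nat \<Rightarrow> complex) \<Rightarrow> real \<Rightarrow> real \<Rightarrow> real \<Rightarrow> real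
    \<Rightarrow> (real \<times> real \<Rightarrow> complex) \<Rightarrow> (real \<times> real \<Rightarrow> complex)" where
  "twisted_op m a \<alpha> \<beta> \<gamma> \<delta> u = (\<lambda>z. \<Sum>(k,j)\<in>{(k,j). j + k \<le> m}.
      (-1) ^ (j + k) * a k j * ((twP \<alpha> \<beta> ^^ j) ((twQ \<gamma> \<delta> ^^ k) u)) z)"

definition represents ::
  "((real \<times> real \<Rightarrow> complex) \<Rightarrow> (real \<times> real \<Rightarrow> complex)) \<Rightarrow> nat
     \<Rightarrow> (nat \<Rightarrow> nat \<Rightarrow> real \<times> real \<Rightarrow> complex) \<Rightarrow> bool" where
  "represents A N c \<longleftrightarrow> (\<forall>u. smooth2 u \<longrightarrow>
     A u = (\<lambda>z. \<Sum>p\<le>N. \<Sum>q\<le>N. c p q z * (Dx ^^ p) ((Dy ^^ q) u) z))"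

definition symbol_of ::
  "nat \<Rightarrow> (nat \<Rightarrow> nat \<Rightarrow> real \<times> real \<Rightarrow> complex) \<Rightarrow> (real \<times> real) \<times> (real \<times> real) \<Rightarrow> complex" where
  "symbol_of N c = (\<lambda>((x,y),(\<xi>,\<eta>)). \<Sum>p\<le>N. \<Sum>q\<le>N.
      c p q (x,y) * complex_of_real \<xi> ^ p * complex_of_real \<eta> ^ q)"

definition pdir :: "('a::euclidean_space \<Rightarrow> complex) \<Rightarrow> 'a \<Rightarrow> 'a \<Rightarrow> complex" where
  "pdir f b z = vector_derivative (\<lambda>t. f (z + t *\<^sub>R b)) (at 0)"

definition glob_hypoelliptic :: "('a::euclidean_space \<Rightarrow> complex) \<Rightarrow> bool" where
  "glob_hypoelliptic a \<longleftrightarrow>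
     (\<exists>K. compact K \<and> (\<forall>z. z \<notin> K \<longrightarrow> a z \<noteq> 0)) \<and>
     (\<forall>b\<in>Basis. ((\<lambda>z. pdir a b z / a z) \<longlongrightarrow> 0) at_infinity)"

end

theory Submission
  imports Defs "HOL-Computational_Algebra.Polynomial"
begin


definition evC :: "complex poly poly \<Rightarrow> complex \<Rightarrow> complex \<Rightarrow> complex" where
  "evC G s t = poly (map_poly (\<lambda>c. poly c s) G) t"

lemma evC_pCons[simp]: "evC (pCons c G) s t = poly c s + t * evC G s t"
  by (simp add: evC_def map_poly_pCons)

lemma evC_0[simp]: "evC 0 s t = 0" by (simp add: evC_def)

lemma evC_add[simp]: "evC (G + H) s t = evC G s t + evC H s t"
proof -
  have "map_poly (\<lambda>c. poly c s) (G + H) = map_poly (\<lambda>c. poly c s) G + map_poly (\<lambda>c. poly c s) H"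
    by (intro poly_eqI) (simp add: coeff_map_poly)
  then show ?thesis by (simp add: evC_def)
qed

lemma evC_const[simp]: "evC [:c:] s t = poly c s" by simp

lemma evC_smult[simp]: "evC (smult c G) s t = poly c s * evC G s t"
  by (induction G rule: pCons_induct) (auto simp: algebra_simps)

lemma evC_1[simp]: "evC 1 s t = 1" by (simp add: one_pCons)

lemma evC_minus[simp]: "evC (- G) s t = - evC G s t"
  using evC_add[of G "-G" s t] by (simp add: eq_neg_iff_add_eq_0 add.commute)

lemma evC_diff[simp]: "evC (G - H) s t = evC G s t - evC H s t"
  using evC_add[of G "-H" s t] by simp

lemma evC_sum: "evC (sum f A) s t = (\<Sum>i\<in>A. evC (f i) s t)"
  by (induction A rule: infinite_finite_induct) auto

lemma map_pderiv_pCons[simp]: "map_poly pderiv (pCons c G) = pCons (pderiv c) (map_poly pderiv G)"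
  by (simp add: map_poly_pCons)

lemma evC_deriv:
  fixes a b c d :: complex
  shows "((\<lambda>w. evC G (a + b*w) (c + d*w)) has_field_derivative
     (b * evC (map_poly pderiv G) (a+b*w) (c+d*w) + d * evC (pderiv G) (a+b*w) (c+d*w))) (at w)"
proof (induction G rule: pCons_induct)
  case 0
  then show ?case by simp
next
  case (pCons e G)
  have h0: "((\<lambda>w. a + b*w) has_field_derivative b) (at w)"
    by (auto intro!: derivative_eq_intros)
  have h1: "((\<lambda>w. poly e (a + b*w)) has_field_derivative poly (pderiv e) (a+b*w) * b) (at w)"
    by (rule DERIV_chain2[OF poly_DERIV h0])
  have h2: "((\<lambda>w. c + d*w) has_field_derivative d) (at w)"
    by (auto intro!: derivative_eq_intros)
  have "((\<lambda>w. poly e (a + b*w) + (c + d*w) * evC G (a + b*w) (c + d*w)) has_field_derivative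
     poly (pderiv e) (a+b*w) * b + (d * evC G (a + b*w) (c + d*w) + (c+d*w) *
      (b * evC (map_poly pderiv G) (a+b*w) (c+d*w) + d * evC (pderiv G) (a+b*w) (c+d*w)))) (at w)"
    using DERIV_add[OF h1 DERIV_mult[OF h2 pCons.IH]] by (simp add: algebra_simps)
  then show ?case by (simp add: pderiv_pCons algebra_simps)
qed



definition Qop :: "complex \<Rightarrow> complex poly poly \<Rightarrow> complex poly poly" where
  "Qop bg G = pCons 0 G + smult [:\<i> * bg:] (map_poly pderiv G)"

definition Pop :: "complex \<Rightarrow> complex \<Rightarrow> complex poly poly \<Rightarrow> complex poly poly" where
  "Pop u ad G = smult [:0,1:] G + pCons 0 (smult [:u:] G)
     + smult [:\<i> * ad:] (pderiv G - smult [:u:] (map_poly pderiv G))"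

definition topc :: "nat \<Rightarrow> complex poly poly \<Rightarrow> complex \<Rightarrow> bool" where
  "topc n G c \<longleftrightarrow> degree G \<le> n \<and> coeff G n = [:c:]"

lemma degree_map_pderiv_le: "degree (map_poly pderiv G) \<le> degree G"
  by (rule degree_le) (simp add: coeff_map_poly coeff_eq_0)

lemma topc_Qop: "topc n G c \<Longrightarrow> topc (Suc n) (Qop bg G) c"
proof -
  assume h: "topc n G c"
  have d1: "degree (map_poly pderiv G) \<le> n" using h degree_map_pderiv_le[of G] by (auto simp: topc_def)
  have "degree (pCons 0 G) \<le> Suc n" using h degree_pCons_le[of 0 G] by (auto simp: topc_def)
  moreover have "degree (smult [:\<i> * bg:] (map_poly pderiv G)) \<le> Suc n"
    using d1 degree_smult_le[of "[:\<i> * bg:]" "map_poly pderiv G"] by linarith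
  ultimately have "degree (Qop bg G) \<le> Suc n" unfolding Qop_def
    using degree_add_le by blast
  moreover have "coeff (smult [:\<i> * bg:] (map_poly pderiv G)) (Suc n) = 0"
    using d1 by (simp add: coeff_eq_0)
  ultimately show ?thesis using h by (simp add: topc_def Qop_def)
qed

lemma topc_Pop: "topc n G c \<Longrightarrow> topc (Suc n) (Pop u ad G) (u * c)"
proof -
  assume h: "topc n G c"
  have dG: "degree G \<le> n" using h by (auto simp: topc_def)
  have d1: "degree (map_poly pderiv G) \<le> n" using dG degree_map_pderiv_le[of G] by auto
  have d2: "degree (pderiv G) \<le> n" using dG degree_pderiv[of G] by auto
  have d3: "degree (pderiv G - smult [:u:] (map_poly pderiv G)) \<le> n"
    using d1 d2 degree_diff_le degree_smult_le order_trans by blast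
  have d4: "degree (smult [:\<i> * ad:] (pderiv G - smult [:u:] (map_poly pderiv G))) \<le> Suc n"
    using d3 degree_smult_le le_SucI order_trans by blast
  have d5: "degree (smult [:0,1:] G) \<le> Suc n" using dG degree_smult_le le_SucI order_trans by blast
  have d6: "degree (pCons 0 (smult [:u:] G)) \<le> Suc n"
    using dG degree_smult_le[of "[:u:]" G] degree_pCons_le[of 0 "smult [:u:] G"] by linarith
  have "degree (Pop u ad G) \<le> Suc n" unfolding Pop_def
    using d4 d5 d6 degree_add_le by metis
  moreover have "coeff (smult [:\<i> * ad:] (pderiv G - smult [:u:] (map_poly pderiv G))) (Suc n) = 0"
    using d1 d2 by (simp add: coeff_eq_0)
  moreover have "coeff G (Suc n) = 0" using dG by (simp add: coeff_eq_0)
  ultimately show ?thesis using h by (simp add: topc_def Pop_def mult.commute)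
qed

lemma topc_iter: "topc (j + k) ((Pop u ad ^^ j) ((Qop bg ^^ k) 1)) (u ^ j)"
proof -
  have "topc k ((Qop bg ^^ k) 1) 1"
  proof (induction k)
    case 0 then show ?case by (simp add: topc_def)
  next
    case (Suc k) then show ?case using topc_Qop by simp
  qed
  then show ?thesis
    by (induction j) (auto dest: topc_Pop simp: mult.commute)
qed



definition Ffin :: "nat \<Rightarrow> (nat \<Rightarrow> nat \<Rightarrow> complex) \<Rightarrow> complex \<Rightarrow> complex \<Rightarrow> complex \<Rightarrow> complex poly poly" where
  "Ffin m a u ad bg = (\<Sum>(k,j)\<in>{(k,j). j + k \<le> m}.
      smult [:(-1) ^ (j + k) * a k j:] ((Pop u ad ^^ j) ((Qop bg ^^ k) 1)))"

lemma finite_T: "finite {(k,j). j + k \<le> (m::nat)}"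
proof -
  have "{(k,j). j + k \<le> m} \<subseteq> {..m} \<times> {..m}" by auto
  then show ?thesis using finite_subset by blast
qed

definition Hs :: "nat \<Rightarrow> (nat \<Rightarrow> nat \<Rightarrow> complex) \<Rightarrow> complex \<Rightarrow> complex" where
  "Hs m a u = (\<Sum>(k,j)\<in>{(k,j). j + k \<le> m}. if j + k = m then (-1) ^ m * a k j * u ^ j else 0)"

lemma Ffin_top: "degree (Ffin m a u ad bg) \<le> m \<and> coeff (Ffin m a u ad bg) m = [:Hs m a u:]"
proof
  show "degree (Ffin m a u ad bg) \<le> m" unfolding Ffin_def
  proof (rule degree_sum_le[OF finite_T], clarify)
    fix k j assume "j + k \<le> m"
    then show "degree (smult [:(-1) ^ (j + k) * a k j:] ((Pop u ad ^^ j) ((Qop bg ^^ k) 1))) \<le> m"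
      using topc_iter[of j k u ad bg] degree_smult_le unfolding topc_def by (meson order_trans)
  qed
next
  have "coeff (Ffin m a u ad bg) m = (\<Sum>(k,j)\<in>{(k,j). j + k \<le> m}.
      [:if j + k = m then (-1) ^ m * a k j * u ^ j else 0:])"
    unfolding Ffin_def coeff_sum
  proof (rule sum.cong[OF refl], clarify)
    fix k j assume jk: "j + k \<le> m"
    have t: "topc (j + k) ((Pop u ad ^^ j) ((Qop bg ^^ k) 1)) (u ^ j)" by (rule topc_iter)
    show "coeff (smult [:(-1) ^ (j + k) * a k j:] ((Pop u ad ^^ j) ((Qop bg ^^ k) 1))) m =
         [:if j + k = m then (-1) ^ m * a k j * u ^ j else 0:]"
    proof (cases "j + k = m")
      case True then show ?thesis using t by (auto simp: topc_def)
    next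
      case False then have "j + k < m" using jk by simp
      then show ?thesis using t by (auto simp: topc_def coeff_eq_0)
    qed
  qed
  also have "\<dots> = [:Hs m a u:]" unfolding Hs_def
    by (induction rule: infinite_finite_induct) (auto simp: case_prod_unfold)
  finally show "coeff (Ffin m a u ad bg) m = [:Hs m a u:]" .
qed



lemma exists_u:
  assumes "\<exists>k j. j + k = m \<and> a k j \<noteq> 0"
  shows "\<exists>u::real. Hs m a (of_real u) \<noteq> 0"
proof -
  obtain k0 j0 where kj: "j0 + k0 = m" "a k0 j0 \<noteq> 0" using assms by blast
  define Hp where "Hp = (\<Sum>(k,j)\<in>{(k,j). j + k \<le> m}. if j + k = m then monom ((-1) ^ m * a k j) j else 0)"
  have ev: "poly Hp x = Hs m a x" for x
    unfolding Hp_def Hs_def poly_sum by (rule sum.cong) (auto simp: poly_monom)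
  have "coeff Hp j0 = (\<Sum>(k,j)\<in>{(k,j). j + k \<le> m}. if (k,j) = (k0,j0) then (-1) ^ m * a k j else 0)"
    unfolding Hp_def coeff_sum
    by (rule sum.cong) (use kj in \<open>auto simp: coeff_monom split: if_splits\<close>)
  also have "\<dots> = (-1) ^ m * a k0 j0"
  proof -
    have "(\<Sum>(k,j)\<in>{(k,j). j + k \<le> m}. if (k,j) = (k0,j0) then (-1) ^ m * a k j else 0)
       = (\<Sum>x\<in>{(k,j). j + k \<le> m}. if x = (k0,j0) then (-1) ^ m * a k0 j0 else 0)"
      by (rule sum.cong) (auto split: if_splits)
    also have "\<dots> = (-1) ^ m * a k0 j0" using kj sum.delta[OF finite_T[of m], of "(k0,j0)" "\<lambda>_. (-1) ^ m * a k0 j0"] by (auto split: if_splits)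
    finally show ?thesis .
  qed
  finally have "coeff Hp j0 \<noteq> 0" using kj by simp
  then have "Hp \<noteq> 0" by auto
  then have fin: "finite {x. poly Hp x = 0}" by (rule poly_roots_finite)
  have "finite {n::nat. poly Hp (of_nat n) = 0}"
    using finite_vimageI[OF fin, of "of_nat :: nat \<Rightarrow> complex"] inj_of_nat by (simp add: vimage_def)
  then obtain n::nat where "poly Hp (of_nat n) \<noteq> 0"
    using infinite_UNIV_nat ex_new_if_finite by blast
  then show ?thesis using ev by (intro exI[of _ "real n"]) simp
qed



lemma vd_of_real:
  assumes "(f has_field_derivative f') (at (of_real x))"
  shows "vector_derivative (\<lambda>t::real. f (of_real t)) (at x) = f'"
  using vector_derivative_at[OF has_vector_derivative_real_field[OF assms]] .

definition EE :: "real \<Rightarrow> real \<Rightarrow> real \<times> real \<Rightarrow> complex" where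
  "EE \<xi> \<eta> z = exp (\<i> * of_real (fst z * \<xi> + snd z * \<eta>))"

lemma EE_deriv_x:
  "((\<lambda>w. exp (\<i> * (w * of_real \<xi> + of_real (y * \<eta>)))) has_field_derivative
     exp (\<i> * (w * of_real \<xi> + of_real (y * \<eta>))) * (\<i> * of_real \<xi>)) (at w)"
  by (auto intro!: derivative_eq_intros)

lemma EE_deriv_y:
  "((\<lambda>w. exp (\<i> * (of_real (x * \<xi>) + w * of_real \<eta>))) has_field_derivative
     exp (\<i> * (of_real (x * \<xi>) + w * of_real \<eta>)) * (\<i> * of_real \<eta>)) (at w)"
  by (auto intro!: derivative_eq_intros)

lemma Dx_EE: "Dx (\<lambda>z. K * EE \<xi> \<eta> z) = (\<lambda>z. (K * of_real \<xi>) * EE \<xi> \<eta> z)"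
proof (rule ext, clarify)
  fix x y :: real
  have d: "((\<lambda>w. K * exp (\<i> * (w * of_real \<xi> + of_real (y * \<eta>)))) has_field_derivative
     K * (exp (\<i> * (of_real x * of_real \<xi> + of_real (y * \<eta>))) * (\<i> * of_real \<xi>))) (at (of_real x))"
    by (rule DERIV_cmult[OF EE_deriv_x])
  have "vector_derivative (\<lambda>t. K * EE \<xi> \<eta> (t, y)) (at x) =
     K * (exp (\<i> * (of_real x * of_real \<xi> + of_real (y * \<eta>))) * (\<i> * of_real \<xi>))"
    using vd_of_real[OF d] by (simp add: EE_def)
  then show "Dx (\<lambda>z. K * EE \<xi> \<eta> z) (x, y) = K * of_real \<xi> * EE \<xi> \<eta> (x, y)"
    by (simp add: Dx_def EE_def algebra_simps)
qed

lemma Dy_EE: "Dy (\<lambda>z. K * EE \<xi> \<eta> z) = (\<lambda>z. (K * of_real \<eta>) * EE \<xi> \<eta> z)"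
proof (rule ext, clarify)
  fix x y :: real
  have d: "((\<lambda>w. K * exp (\<i> * (of_real (x * \<xi>) + w * of_real \<eta>))) has_field_derivative
     K * (exp (\<i> * (of_real (x * \<xi>) + of_real y * of_real \<eta>)) * (\<i> * of_real \<eta>))) (at (of_real y))"
    by (rule DERIV_cmult[OF EE_deriv_y])
  have "vector_derivative (\<lambda>t. K * EE \<xi> \<eta> (x, t)) (at y) =
     K * (exp (\<i> * (of_real (x * \<xi>) + of_real y * of_real \<eta>)) * (\<i> * of_real \<eta>))"
    using vd_of_real[OF d] by (simp add: EE_def)
  then show "Dy (\<lambda>z. K * EE \<xi> \<eta> z) (x, y) = K * of_real \<eta> * EE \<xi> \<eta> (x, y)"
    by (simp add: Dy_def EE_def algebra_simps)
qed

lemma Dword_EE: "\<exists>K'. Dword ws (\<lambda>z. K * EE \<xi> \<eta> z) = (\<lambda>z. K' * EE \<xi> \<eta> z)"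
proof (induction ws)
  case Nil then show ?case by auto
next
  case (Cons b ws)
  then obtain K' where "Dword ws (\<lambda>z. K * EE \<xi> \<eta> z) = (\<lambda>z. K' * EE \<xi> \<eta> z)" by blast
  then show ?case using Dx_EE Dy_EE by auto
qed

lemma smooth_EE: "smooth2 (EE \<xi> \<eta>)"
  unfolding smooth2_def
proof
  fix ws
  obtain K' where K': "Dword ws (\<lambda>z. 1 * EE \<xi> \<eta> z) = (\<lambda>z. K' * EE \<xi> \<eta> z)" using Dword_EE by blast
  have g: "((\<lambda>z::real\<times>real. \<i> * (complex_of_real (fst z * \<xi> + snd z * \<eta>))) has_derivative (\<lambda>h. \<i> * (complex_of_real (fst h * \<xi> + snd h * \<eta>)))) (at z)" for z
    by (auto intro!: derivative_eq_intros)
  have "\<exists>D. ((\<lambda>z::real\<times>real. K' * exp (\<i> * (complex_of_real (fst z * \<xi> + snd z * \<eta>)))) has_derivative D) (at z)" for z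
    using has_derivative_mult_right[OF has_derivative_compose[OF g DERIV_exp[unfolded has_field_derivative_def]], of K'] by blast
  then have "(\<lambda>z. K' * EE \<xi> \<eta> z) differentiable_on UNIV"
    unfolding EE_def differentiable_on_def differentiable_def by blast
  then show "Dword ws (EE \<xi> \<eta>) differentiable_on UNIV" using K' by simp
qed

lemma DxDy_EE: "(Dx ^^ p) ((Dy ^^ q) (EE \<xi> \<eta>)) = (\<lambda>z. (of_real \<xi> ^ p * of_real \<eta> ^ q) * EE \<xi> \<eta> z)"
proof -
  have h1: "(Dy ^^ q) (\<lambda>z. K * EE \<xi> \<eta> z) = (\<lambda>z. (K * of_real \<eta> ^ q) * EE \<xi> \<eta> z)" for K
  proof (induction q arbitrary: K)
    case 0 then show ?case by simp
  next
    case (Suc q)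
    have "(Dy ^^ Suc q) (\<lambda>z. K * EE \<xi> \<eta> z) = Dy ((Dy ^^ q) (\<lambda>z. K * EE \<xi> \<eta> z))" by simp
    also have "\<dots> = Dy (\<lambda>z. (K * of_real \<eta> ^ q) * EE \<xi> \<eta> z)" using Suc.IH by simp
    also have "\<dots> = (\<lambda>z. (K * of_real \<eta> ^ q * of_real \<eta>) * EE \<xi> \<eta> z)" by (rule Dy_EE)
    finally show ?case by (simp add: algebra_simps)
  qed
  have h2: "(Dx ^^ p) (\<lambda>z. K * EE \<xi> \<eta> z) = (\<lambda>z. (K * of_real \<xi> ^ p) * EE \<xi> \<eta> z)" for K
  proof (induction p arbitrary: K)
    case 0 then show ?case by simp
  next
    case (Suc p)
    have "(Dx ^^ Suc p) (\<lambda>z. K * EE \<xi> \<eta> z) = Dx ((Dx ^^ p) (\<lambda>z. K * EE \<xi> \<eta> z))" by simp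
    also have "\<dots> = Dx (\<lambda>z. (K * of_real \<xi> ^ p) * EE \<xi> \<eta> z)" using Suc.IH by simp
    also have "\<dots> = (\<lambda>z. (K * of_real \<xi> ^ p * of_real \<xi>) * EE \<xi> \<eta> z)" by (rule Dx_EE)
    finally show ?case by (simp add: algebra_simps)
  qed
  show ?thesis using h1[of 1] h2[of "of_real \<eta> ^ q"] by (simp add: algebra_simps)
qed



definition Psi :: "real \<Rightarrow> real \<Rightarrow> real \<Rightarrow> real \<Rightarrow> real \<Rightarrow> real \<Rightarrow> real \<Rightarrow> complex poly poly \<Rightarrow> real \<times> real \<Rightarrow> complex" where
  "Psi \<alpha> \<beta> \<gamma> \<delta> u \<xi> \<eta> G = (\<lambda>(x,y). EE \<xi> \<eta> (x,y) *
     evC G (of_real (\<alpha>*\<eta> - \<beta>*x - u*(\<gamma>*\<xi> - \<delta>*y))) (of_real (\<gamma>*\<xi> - \<delta>*y)))"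

lemma Dx_Psi:
  "Dx (Psi \<alpha> \<beta> \<gamma> \<delta> u \<xi> \<eta> G) (x,y) = EE \<xi> \<eta> (x,y) *
     (of_real \<xi> * evC G (of_real (\<alpha>*\<eta> - \<beta>*x - u*(\<gamma>*\<xi> - \<delta>*y))) (of_real (\<gamma>*\<xi> - \<delta>*y))
      + \<i> * of_real \<beta> * evC (map_poly pderiv G) (of_real (\<alpha>*\<eta> - \<beta>*x - u*(\<gamma>*\<xi> - \<delta>*y))) (of_real (\<gamma>*\<xi> - \<delta>*y)))"
proof -
  define A where "A = complex_of_real (\<alpha>*\<eta> - u*(\<gamma>*\<xi> - \<delta>*y))"
  define B where "B = complex_of_real (- \<beta>)"
  define C where "C = complex_of_real (\<gamma>*\<xi> - \<delta>*y)"
  define f where "f = (\<lambda>w. exp (\<i> * (w * of_real \<xi> + of_real (y * \<eta>))) * evC G (A + B*w) (C + 0*w))"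
  define X where "X = exp (\<i> * (of_real x * of_real \<xi> + of_real (y * \<eta>)))"
  have fd: "(f has_field_derivative
     X * (B * evC (map_poly pderiv G) (A + B * of_real x) (C + 0 * of_real x)
          + 0 * evC (pderiv G) (A + B * of_real x) (C + 0 * of_real x))
     + X * (\<i> * of_real \<xi>) * evC G (A + B * of_real x) (C + 0 * of_real x)) (at (of_real x))"
    unfolding f_def X_def by (rule DERIV_mult'[OF EE_deriv_x evC_deriv])
  have eq: "(\<lambda>t. Psi \<alpha> \<beta> \<gamma> \<delta> u \<xi> \<eta> G (t, y)) = (\<lambda>t. f (of_real t))"
    by (rule ext) (simp add: Psi_def f_def EE_def A_def B_def C_def algebra_simps)
  have "Dx (Psi \<alpha> \<beta> \<gamma> \<delta> u \<xi> \<eta> G) (x,y) = - \<i> * vector_derivative (\<lambda>t. f (of_real t)) (at x)"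
    by (simp add: Dx_def eq)
  also have "\<dots> = - \<i> * (X * (B * evC (map_poly pderiv G) (A + B * of_real x) (C + 0 * of_real x)
          + 0 * evC (pderiv G) (A + B * of_real x) (C + 0 * of_real x))
     + X * (\<i> * of_real \<xi>) * evC G (A + B * of_real x) (C + 0 * of_real x))"
    by (simp only: vd_of_real[OF fd])
  finally show ?thesis
    by (simp add: A_def B_def C_def X_def EE_def algebra_simps)
qed

lemma Dy_Psi:
  "Dy (Psi \<alpha> \<beta> \<gamma> \<delta> u \<xi> \<eta> G) (x,y) = EE \<xi> \<eta> (x,y) *
     (of_real \<eta> * evC G (of_real (\<alpha>*\<eta> - \<beta>*x - u*(\<gamma>*\<xi> - \<delta>*y))) (of_real (\<gamma>*\<xi> - \<delta>*y))
      - \<i> * of_real (u * \<delta>) * evC (map_poly pderiv G) (of_real (\<alpha>*\<eta> - \<beta>*x - u*(\<gamma>*\<xi> - \<delta>*y))) (of_real (\<gamma>*\<xi> - \<delta>*y))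
      + \<i> * of_real \<delta> * evC (pderiv G) (of_real (\<alpha>*\<eta> - \<beta>*x - u*(\<gamma>*\<xi> - \<delta>*y))) (of_real (\<gamma>*\<xi> - \<delta>*y)))"
proof -
  define A where "A = complex_of_real (\<alpha>*\<eta> - \<beta>*x - u*\<gamma>*\<xi>)"
  define B where "B = complex_of_real (u*\<delta>)"
  define C where "C = complex_of_real (\<gamma>*\<xi>)"
  define D where "D = complex_of_real (-\<delta>)"
  define f where "f = (\<lambda>w. exp (\<i> * (of_real (x * \<xi>) + w * of_real \<eta>)) * evC G (A + B*w) (C + D*w))"
  define X where "X = exp (\<i> * (of_real (x * \<xi>) + of_real y * of_real \<eta>))"
  have fd: "(f has_field_derivative
     X * (B * evC (map_poly pderiv G) (A + B * of_real y) (C + D * of_real y)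
          + D * evC (pderiv G) (A + B * of_real y) (C + D * of_real y))
     + X * (\<i> * of_real \<eta>) * evC G (A + B * of_real y) (C + D * of_real y)) (at (of_real y))"
    unfolding f_def X_def by (rule DERIV_mult'[OF EE_deriv_y evC_deriv])
  have eq: "(\<lambda>t. Psi \<alpha> \<beta> \<gamma> \<delta> u \<xi> \<eta> G (x, t)) = (\<lambda>t. f (of_real t))"
    by (rule ext) (simp add: Psi_def f_def EE_def A_def B_def C_def D_def algebra_simps)
  have "Dy (Psi \<alpha> \<beta> \<gamma> \<delta> u \<xi> \<eta> G) (x,y) = - \<i> * vector_derivative (\<lambda>t. f (of_real t)) (at y)"
    by (simp add: Dy_def eq)
  also have "\<dots> = - \<i> * (X * (B * evC (map_poly pderiv G) (A + B * of_real y) (C + D * of_real y)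
          + D * evC (pderiv G) (A + B * of_real y) (C + D * of_real y))
     + X * (\<i> * of_real \<eta>) * evC G (A + B * of_real y) (C + D * of_real y))"
    by (simp only: vd_of_real[OF fd])
  finally show ?thesis
    by (simp add: A_def B_def C_def D_def X_def EE_def algebra_simps)
qed

lemma twQ_Psi: "twQ \<gamma> \<delta> (Psi \<alpha> \<beta> \<gamma> \<delta> u \<xi> \<eta> G) = Psi \<alpha> \<beta> \<gamma> \<delta> u \<xi> \<eta> (Qop (of_real (\<beta> * \<gamma>)) G)"
proof (rule ext, clarify)
  fix x y
  show "twQ \<gamma> \<delta> (Psi \<alpha> \<beta> \<gamma> \<delta> u \<xi> \<eta> G) (x, y) = Psi \<alpha> \<beta> \<gamma> \<delta> u \<xi> \<eta> (Qop (of_real (\<beta> * \<gamma>)) G) (x, y)"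
    unfolding twQ_def Dx_Psi by (simp add: Psi_def Qop_def algebra_simps)
qed

lemma twP_Psi: "twP \<alpha> \<beta> (Psi \<alpha> \<beta> \<gamma> \<delta> u \<xi> \<eta> G) = Psi \<alpha> \<beta> \<gamma> \<delta> u \<xi> \<eta> (Pop (of_real u) (of_real (\<alpha> * \<delta>)) G)"
proof (rule ext, clarify)
  fix x y
  show "twP \<alpha> \<beta> (Psi \<alpha> \<beta> \<gamma> \<delta> u \<xi> \<eta> G) (x, y) = Psi \<alpha> \<beta> \<gamma> \<delta> u \<xi> \<eta> (Pop (of_real u) (of_real (\<alpha> * \<delta>)) G) (x, y)"
    unfolding twP_def Dy_Psi by (simp add: Psi_def Pop_def algebra_simps)
qed



lemma Psi_1: "Psi \<alpha> \<beta> \<gamma> \<delta> u \<xi> \<eta> 1 = EE \<xi> \<eta>"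
  by (auto simp: Psi_def)

lemma Psi_app: "Psi \<alpha> \<beta> \<gamma> \<delta> u \<xi> \<eta> G (x,y) = EE \<xi> \<eta> (x,y) *
     evC G (of_real (\<alpha>*\<eta> - \<beta>*x - u*(\<gamma>*\<xi> - \<delta>*y))) (of_real (\<gamma>*\<xi> - \<delta>*y))"
  unfolding Psi_def by simp

lemma twisted_Psi:
  "twisted_op m a \<alpha> \<beta> \<gamma> \<delta> (EE \<xi> \<eta>) (x,y) = EE \<xi> \<eta> (x,y) *
     evC (Ffin m a (of_real u) (of_real (\<alpha> * \<delta>)) (of_real (\<beta> * \<gamma>)))
       (of_real (\<alpha>*\<eta> - \<beta>*x - u*(\<gamma>*\<xi> - \<delta>*y))) (of_real (\<gamma>*\<xi> - \<delta>*y))"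
proof -
  let ?Q = "Qop (of_real (\<beta> * \<gamma>))" and ?P = "Pop (of_real u) (of_real (\<alpha> * \<delta>))"
  let ?Psi = "Psi \<alpha> \<beta> \<gamma> \<delta> u \<xi> \<eta>"
  have q: "(twQ \<gamma> \<delta> ^^ k) (?Psi G) = ?Psi ((?Q ^^ k) G)" for k G
    by (induction k) (auto simp: twQ_Psi)
  have p: "(twP \<alpha> \<beta> ^^ j) (?Psi G) = ?Psi ((?P ^^ j) G)" for j G
    by (induction j) (auto simp: twP_Psi)
  have "twisted_op m a \<alpha> \<beta> \<gamma> \<delta> (EE \<xi> \<eta>) (x,y) = (\<Sum>(k,j)\<in>{(k,j). j + k \<le> m}.
      (-1) ^ (j + k) * a k j * ?Psi ((?P ^^ j) ((?Q ^^ k) 1)) (x,y))"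
  proof -
    have e: "EE \<xi> \<eta> = ?Psi 1" by (rule Psi_1[symmetric])
    show ?thesis by (simp only: twisted_op_def e q p)
  qed
  also have "\<dots> = EE \<xi> \<eta> (x,y) * (\<Sum>(k,j)\<in>{(k,j). j + k \<le> m}.
      (-1) ^ (j + k) * a k j * evC ((?P ^^ j) ((?Q ^^ k) 1))
       (of_real (\<alpha>*\<eta> - \<beta>*x - u*(\<gamma>*\<xi> - \<delta>*y))) (of_real (\<gamma>*\<xi> - \<delta>*y)))"
    unfolding sum_distrib_left by (rule sum.cong[OF refl]) (simp only: Psi_app case_prod_unfold mult.left_commute)
  also have "\<dots> = EE \<xi> \<eta> (x,y) *
     evC (Ffin m a (of_real u) (of_real (\<alpha> * \<delta>)) (of_real (\<beta> * \<gamma>)))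
       (of_real (\<alpha>*\<eta> - \<beta>*x - u*(\<gamma>*\<xi> - \<delta>*y))) (of_real (\<gamma>*\<xi> - \<delta>*y))"
    unfolding Ffin_def evC_sum by (simp add: case_prod_unfold)
  finally show ?thesis .
qed

lemma symbol_eq:
  assumes "represents (twisted_op m a \<alpha> \<beta> \<gamma> \<delta>) N c"
  shows "symbol_of N c ((x,y),(\<xi>,\<eta>)) =
     evC (Ffin m a (of_real u) (of_real (\<alpha> * \<delta>)) (of_real (\<beta> * \<gamma>)))
       (of_real (\<alpha>*\<eta> - \<beta>*x - u*(\<gamma>*\<xi> - \<delta>*y))) (of_real (\<gamma>*\<xi> - \<delta>*y))"
proof -
  have "twisted_op m a \<alpha> \<beta> \<gamma> \<delta> (EE \<xi> \<eta>) (x,y) =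
      (\<Sum>p\<le>N. \<Sum>q\<le>N. c p q (x,y) * (Dx ^^ p) ((Dy ^^ q) (EE \<xi> \<eta>)) (x,y))"
  proof -
    have "twisted_op m a \<alpha> \<beta> \<gamma> \<delta> (EE \<xi> \<eta>) = (\<lambda>z. \<Sum>p\<le>N. \<Sum>q\<le>N. c p q z * (Dx ^^ p) ((Dy ^^ q) (EE \<xi> \<eta>)) z)"
      using assms smooth_EE[of \<xi> \<eta>] unfolding represents_def by blast
    then show ?thesis by (rule fun_cong)
  qed
  also have "\<dots> = symbol_of N c ((x,y),(\<xi>,\<eta>)) * EE \<xi> \<eta> (x,y)"
    unfolding DxDy_EE symbol_of_def by (simp add: sum_distrib_left sum_distrib_right mult_ac)
  finally have h1: "twisted_op m a \<alpha> \<beta> \<gamma> \<delta> (EE \<xi> \<eta>) (x,y) = symbol_of N c ((x,y),(\<xi>,\<eta>)) * EE \<xi> \<eta> (x,y)" .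
  note h2 = twisted_Psi[of m a \<alpha> \<beta> \<gamma> \<delta> \<xi> \<eta> x y u]
  have ne: "EE \<xi> \<eta> (x,y) \<noteq> 0" by (simp add: EE_def)
  have "EE \<xi> \<eta> (x,y) * symbol_of N c ((x,y),(\<xi>,\<eta>)) = EE \<xi> \<eta> (x,y) *
     evC (Ffin m a (of_real u) (of_real (\<alpha> * \<delta>)) (of_real (\<beta> * \<gamma>)))
       (of_real (\<alpha>*\<eta> - \<beta>*x - u*(\<gamma>*\<xi> - \<delta>*y))) (of_real (\<gamma>*\<xi> - \<delta>*y))"
    using h1 h2 by (simp only: mult.commute)
  then show ?thesis using ne mult_left_cancel by blast
qed



lemma poly_nonzero_real:
  fixes p :: "complex poly"
  assumes "p \<noteq> 0"
  shows "\<exists>r::real. poly p (of_real r) \<noteq> 0"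
proof -
  have fin: "finite {x. poly p x = 0}" using assms by (rule poly_roots_finite)
  have "finite {n::nat. poly p (of_nat n) = 0}"
    using finite_vimageI[OF fin, of "of_nat :: nat \<Rightarrow> complex"] inj_of_nat by (simp add: vimage_def)
  then obtain n::nat where "poly p (of_nat n) \<noteq> 0"
    using infinite_UNIV_nat ex_new_if_finite by blast
  then show ?thesis by (intro exI[of _ "real n"]) simp
qed

lemma pderiv_map0: "pderiv (map_poly (\<lambda>c. poly c 0) F) = map_poly (\<lambda>c. poly c 0) (pderiv F)"
  by (intro poly_eqI) (simp add: coeff_pderiv coeff_map_poly poly_0_coeff_0 of_nat_poly del: of_nat_Suc)

lemma pdir_x:
  fixes S :: "(real \<times> real) \<times> (real \<times> real) \<Rightarrow> complex"
  assumes Seq: "\<And>x y \<xi> \<eta>. S ((x,y),(\<xi>,\<eta>)) = evC F (of_real (\<alpha>*\<eta> - \<beta>*x - u*(\<gamma>*\<xi> - \<delta>*y))) (of_real (\<gamma>*\<xi> - \<delta>*y))"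
  shows "pdir S ((1,0),(0,0)) ((x,y),(\<xi>,\<eta>)) = - of_real \<beta> *
     evC (map_poly pderiv F) (of_real (\<alpha>*\<eta> - \<beta>*x - u*(\<gamma>*\<xi> - \<delta>*y))) (of_real (\<gamma>*\<xi> - \<delta>*y))"
proof -
  define A where "A = complex_of_real (\<alpha>*\<eta> - \<beta>*x - u*(\<gamma>*\<xi> - \<delta>*y))"
  define B where "B = complex_of_real (- \<beta>)"
  define C where "C = complex_of_real (\<gamma>*\<xi> - \<delta>*y)"
  have eq: "(\<lambda>t. S (((x,y),(\<xi>,\<eta>)) + t *\<^sub>R ((1,0),(0,0)))) = (\<lambda>t. evC F (A + B * of_real t) (C + 0 * of_real t))"
    by (rule ext) (simp add: Seq A_def B_def C_def algebra_simps)
  have "pdir S ((1,0),(0,0)) ((x,y),(\<xi>,\<eta>)) = B * evC (map_poly pderiv F) (A + B * of_real 0) (C + 0 * of_real 0)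
      + 0 * evC (pderiv F) (A + B * of_real 0) (C + 0 * of_real 0)"
    unfolding pdir_def eq by (rule vd_of_real[OF evC_deriv])
  then show ?thesis by (simp add: A_def B_def C_def)
qed

lemma pdir_y:
  fixes S :: "(real \<times> real) \<times> (real \<times> real) \<Rightarrow> complex"
  assumes Seq: "\<And>x y \<xi> \<eta>. S ((x,y),(\<xi>,\<eta>)) = evC F (of_real (\<alpha>*\<eta> - \<beta>*x - u*(\<gamma>*\<xi> - \<delta>*y))) (of_real (\<gamma>*\<xi> - \<delta>*y))"
  shows "pdir S ((0,1),(0,0)) ((x,y),(\<xi>,\<eta>)) = of_real (u * \<delta>) *
     evC (map_poly pderiv F) (of_real (\<alpha>*\<eta> - \<beta>*x - u*(\<gamma>*\<xi> - \<delta>*y))) (of_real (\<gamma>*\<xi> - \<delta>*y))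
     - of_real \<delta> * evC (pderiv F) (of_real (\<alpha>*\<eta> - \<beta>*x - u*(\<gamma>*\<xi> - \<delta>*y))) (of_real (\<gamma>*\<xi> - \<delta>*y))"
proof -
  define A where "A = complex_of_real (\<alpha>*\<eta> - \<beta>*x - u*(\<gamma>*\<xi> - \<delta>*y))"
  define B where "B = complex_of_real (u * \<delta>)"
  define C where "C = complex_of_real (\<gamma>*\<xi> - \<delta>*y)"
  define D where "D = complex_of_real (- \<delta>)"
  have eq: "(\<lambda>t. S (((x,y),(\<xi>,\<eta>)) + t *\<^sub>R ((0,1),(0,0)))) = (\<lambda>t. evC F (A + B * of_real t) (C + D * of_real t))"
    by (rule ext) (simp add: Seq A_def B_def C_def D_def algebra_simps)
  have "pdir S ((0,1),(0,0)) ((x,y),(\<xi>,\<eta>)) = B * evC (map_poly pderiv F) (A + B * of_real 0) (C + D * of_real 0)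
      + D * evC (pderiv F) (A + B * of_real 0) (C + D * of_real 0)"
    unfolding pdir_def eq by (rule vd_of_real[OF evC_deriv])
  then show ?thesis by (simp add: A_def B_def C_def D_def)
qed



theorem proposition3p1:
  fixes m :: nat and a :: "nat \<Rightarrow> nat \<Rightarrow> complex" and \<alpha> \<beta> \<gamma> \<delta> :: real
    and N :: nat and c :: "nat \<Rightarrow> nat \<Rightarrow> real \<times> real \<Rightarrow> complex"
  assumes "\<alpha> * \<delta> - \<beta> * \<gamma> = 1"
    and "\<beta> * \<delta> \<noteq> 0"
    and "m \<ge> 1"
    and "\<exists>k j. j + k = m \<and> a k j \<noteq> 0"
    and "represents (twisted_op m a \<alpha> \<beta> \<gamma> \<delta>) N c"
  shows "\<not> glob_hypoelliptic (symbol_of N c)"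
proof
  assume gh: "glob_hypoelliptic (symbol_of N c)"
  have b0: "\<beta> \<noteq> 0" and d0: "\<delta> \<noteq> 0" using assms(2) by auto
  obtain u :: real where hu: "Hs m a (of_real u) \<noteq> 0" using exists_u[OF assms(4)] by blast
  define F where "F = Ffin m a (of_real u) (of_real (\<alpha> * \<delta>)) (of_real (\<beta> * \<gamma>))"
  define S where "S = symbol_of N c"
  have Seq: "\<And>x y \<xi> \<eta>. S ((x,y),(\<xi>,\<eta>)) = evC F (of_real (\<alpha>*\<eta> - \<beta>*x - u*(\<gamma>*\<xi> - \<delta>*y))) (of_real (\<gamma>*\<xi> - \<delta>*y))"
    unfolding S_def F_def by (rule symbol_eq[OF assms(5)])
  define g where "g = map_poly (\<lambda>c. poly c 0) F"
  have gev: "evC F 0 t = poly g t" for t by (simp add: evC_def g_def)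
  have ftop: "degree F \<le> m" "coeff F m = [:Hs m a (of_real u):]"
    using Ffin_top unfolding F_def by auto
  have cg: "coeff g m \<noteq> 0" using ftop hu by (simp add: g_def coeff_map_poly)
  have "degree g \<le> m"
    by (rule degree_le) (use ftop in \<open>auto simp: g_def coeff_map_poly coeff_eq_0\<close>)
  moreover have "m \<le> degree g" using cg le_degree by blast
  ultimately have dg: "degree g = m" by simp
  obtain K where K: "compact K" "\<And>z. z \<notin> K \<Longrightarrow> S z \<noteq> 0"
    using gh unfolding glob_hypoelliptic_def S_def by blast
  have lim: "\<And>b. b \<in> Basis \<Longrightarrow> ((\<lambda>z. pdir S b z / S z) \<longlongrightarrow> 0) at_infinity"
    using gh unfolding glob_hypoelliptic_def S_def by blast
  show False
  proof (cases "\<exists>s0 t0 :: real. evC F (of_real s0) (of_real t0) = 0")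
    case True
    then obtain s0 t0 :: real where z0: "evC F (of_real s0) (of_real t0) = 0" by blast
    obtain B where B: "\<And>z. z \<in> K \<Longrightarrow> norm z \<le> B"
      using compact_imp_bounded[OF K(1)] unfolding bounded_iff by blast
    define r where "r = \<bar>B\<bar> + 1"
    define z where "z = ((- (s0 + u*t0)/\<beta>, (\<gamma>*r - t0)/\<delta>), (r, 0::real))"
    have "norm z \<ge> \<bar>r\<bar>"
    proof -
      have "norm r \<le> norm (r, 0::real)" by (rule norm_fst_le)
      also have "\<dots> \<le> norm ((- (s0 + u*t0)/\<beta>, (\<gamma>*r - t0)/\<delta>), (r, 0::real))" by (rule norm_snd_le)
      finally show ?thesis by (simp add: z_def)
    qed
    then have "z \<notin> K" using B[of z] unfolding r_def by fastforce
    moreover have "S z = 0"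
    proof -
      have e1: "\<alpha>*0 - \<beta>*(- (s0 + u*t0)/\<beta>) - u*t0 = s0"
        using b0 d0 by (simp add: field_simps)
      have e2: "\<gamma>*r - \<delta>*((\<gamma>*r - t0)/\<delta>) = t0" using d0 by (simp add: field_simps)
      show ?thesis unfolding z_def Seq e2 e1 by (rule z0)
    qed
    ultimately show False using K(2) by blast
  next
    case False
    then have nz: "\<And>s t :: real. evC F (of_real s) (of_real t) \<noteq> 0" by blast
    have "pderiv g \<noteq> 0" using dg assms(3) pderiv_eq_0_iff[of g] by simp
    then obtain t0 :: real where t0: "poly (pderiv g) (of_real t0) \<noteq> 0"
      using poly_nonzero_real by blast
    define Ds where "Ds = evC (map_poly pderiv F) 0 (of_real t0)"
    define Dt where "Dt = evC (pderiv F) 0 (of_real t0)"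
    define V where "V = evC F 0 (of_real t0)"
    have Dt0: "Dt \<noteq> 0" using t0 unfolding Dt_def pderiv_map0 g_def by (simp add: evC_def)
    have V0: "V \<noteq> 0" using nz[of 0 t0] by (simp add: V_def)
    define zr where "zr = (\<lambda>r::real. ((- u*t0/\<beta>, - t0/\<delta> + \<gamma>*r/\<delta>), (r, 0::real)))"
    have nr: "norm (zr r) \<ge> \<bar>r\<bar>" for r
    proof -
      have "norm r \<le> norm (r, 0::real)" by (rule norm_fst_le)
      also have "\<dots> \<le> norm ((- u*t0/\<beta>, - t0/\<delta> + \<gamma>*r/\<delta>), (r, 0::real))" by (rule norm_snd_le)
      finally show ?thesis by (simp add: zr_def)
    qed
    have e1: "\<alpha>*0 - \<beta>*(- u*t0/\<beta>) - u*t0 = 0"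
      using b0 d0 by (simp add: field_simps)
    have e2: "\<gamma>*r - \<delta>*(- t0/\<delta> + \<gamma>*r/\<delta>) = t0" for r using d0 by (simp add: field_simps)
    have Sz: "S (zr r) = V" for r unfolding zr_def Seq e2 e1 V_def by simp
    obtain b W where bW: "b \<in> Basis" "W \<noteq> 0" "\<And>r. pdir S b (zr r) = W"
    proof (cases "Ds = 0")
      case True
      have "pdir S ((0,1),(0,0)) (zr r) = - of_real \<delta> * Dt" for r
        unfolding zr_def pdir_y[OF Seq] e2 e1 using True by (simp add: Ds_def Dt_def)
      moreover have "((0::real,1::real),(0::real,0::real)) \<in> Basis" by (simp add: Basis_prod_def zero_prod_def)
      moreover have "- of_real \<delta> * Dt \<noteq> 0" using d0 Dt0 by simp
      ultimately show ?thesis using that by blast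
    next
      case False
      have "pdir S ((1,0),(0,0)) (zr r) = - of_real \<beta> * Ds" for r
        unfolding zr_def pdir_x[OF Seq] e2 e1 by (simp add: Ds_def)
      moreover have "((1::real,0::real),(0::real,0::real)) \<in> Basis" by (simp add: Basis_prod_def zero_prod_def)
      moreover have "- of_real \<beta> * Ds \<noteq> 0" using b0 False by simp
      ultimately show ?thesis using that by blast
    qed
    have "\<forall>e>0. \<exists>B. \<forall>z. norm z \<ge> B \<longrightarrow> dist (pdir S b z / S z) 0 < e"
      using lim[OF bW(1)] unfolding Lim_at_infinity .
    then obtain B where B: "\<And>z. norm z \<ge> B \<Longrightarrow> dist (pdir S b z / S z) 0 < norm (W / V)"
      using bW(2) V0 by (metis divide_eq_0_iff zero_less_norm_iff)
    have "norm (zr (\<bar>B\<bar>)) \<ge> B" using nr[of "\<bar>B\<bar>"] by linarith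
    from B[OF this] show False by (simp add: bW(3) Sz)
  qed
qed


end
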